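(* Let $\rho$ be a representation of $D^{2,2,2}$ and let $\{i,j,k\}=\{1,2,3\}$. Then, as linear maps $X^3_0\to X^0_0$, $$\varphi^{(0)}_i\circ\varphi^{(1)}_j\circ\varphi^{(2)}_i+\varphi^{(0)}_i\circ\varphi^{(1)}_k\circ\varphi^{(2)}_i=0 \qquad\text{and}\qquad \varphi^{(0)}_i\circ\varphi^{(1)}_i\circ\varphi^{(2)}_i=0.$$ Consequently, $\varphi^{(0)}_i\varphi^{(1)}_j\varphi^{(2)}_i(B)=\varphi^{(0)}_i\varphi^{(1)}_k\varphi^{(2)}_i(B)$ for every subspace $B\subseteq X^3_0$.
   Context: $D^{2,2,2}$ is the modular lattice generated by $x_1,y_1,x_2,y_2,x_3,y_3$ subject only to $x_i\subseteq y_i$ ($i=1,2,3$), with a greatest element $I$ adjoined. A representation $\rho$ of $D^{2,2,2}$ in a finite-dimensional vector space $X_0$ is a lattice morphism from $D^{2,2,2}$ to the subspace lattice of $X_0$, with $\rho(I)=X_0$. Write $X_i=\rho(x_i)\subseteq Y_i=\rho(y_i)$. Coxeter functor: put $R=Y_1\oplus Y_2\oplus Y_3$ and $X^1_0=\{(\eta_1,\eta_2,\eta_3)\in R:\sum\eta_i=0\}$. Let $G'_i\subseteq R$ be the triples with $i$-th coordinate in $X_i$, and $H'_i\subseteq R$ the triples with $i$-th coordinate $0$. $\Phi^+\rho$ is the representation in $X^1_0$ with $\Phi^+\rho(y_i)=G'_i\cap X^1_0$, $\Phi^+\rho(x_i)=H'_i\cap X^1_0$, $\Phi^+\rho(I)=X^1_0$.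 Iterates: let $X^n_0$ be the space of $(\Phi^+)^n\rho$, with $X^0_0=X_0$. Let $\varphi^{(n)}_i:X^{n+1}_0\to X^n_0$ be the map $(\eta_1,\eta_2,\eta_3)\mapsto\eta_i$ obtained by applying the construction to $(\Phi^+)^n\rho$. *)

theory Defs
  imports Complex_Main "HOL-Library.Product_Plus"
begin

text \<open>A representation of D^{2,2,2} in a vector space X0 (over a field 'k, with scalar
multiplication s) is the same as a choice of subspaces X_i \<subseteq> Y_i \<subseteq> X0 (i=1,2,3),
since D^{2,2,2} is the free modular lattice on x_i \<le> y_i with a top adjoined.\<close>

record 'v drep =
  sp   :: "'v set"
  xsub :: "nat \<Rightarrow> 'v set"
  ysub :: "nat \<Rightarrow> 'v set"

definition is_rep :: "('k::field \<Rightarrow> 'v::ab_group_add \<Rightarrow> 'v) \<Rightarrow> 'v drep \<Rightarrow> bool" where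
  "is_rep s \<rho> \<longleftrightarrow>
     module.subspace s (sp \<rho>) \<and>
     (\<exists>B. finite B \<and> B \<subseteq> sp \<rho> \<and> module.span s B = sp \<rho>) \<and>
     (\<forall>i\<in>{1,2,3}. module.subspace s (xsub \<rho> i) \<and> module.subspace s (ysub \<rho> i) \<and>
                   xsub \<rho> i \<subseteq> ysub \<rho> i \<and> ysub \<rho> i \<subseteq> sp \<rho>)"

definition proj3 :: "nat \<Rightarrow> 'v \<times> 'v \<times> 'v \<Rightarrow> 'v" where
  "proj3 i t = (if i = 1 then fst t else if i = 2 then fst (snd t) else snd (snd t))"

definition scale3 :: "('k \<Rightarrow> 'v \<Rightarrow> 'v) \<Rightarrow> 'k \<Rightarrow> 'v \<times> 'v \<times> 'v \<Rightarrow> 'v \<times> 'v \<times> 'v" where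
  "scale3 s c t = (s c (fst t), s c (fst (snd t)), s c (snd (snd t)))"

definition Phi :: "'v::ab_group_add drep \<Rightarrow> ('v \<times> 'v \<times> 'v) drep" where
  "Phi \<rho> = (let X1 = {t. proj3 1 t \<in> ysub \<rho> 1 \<and> proj3 2 t \<in> ysub \<rho> 2 \<and> proj3 3 t \<in> ysub \<rho> 3 \<and>
                          proj3 1 t + proj3 2 t + proj3 3 t = 0}
            in \<lparr> sp = X1,
                 xsub = (\<lambda>i. {t \<in> X1. proj3 i t = 0}),
                 ysub = (\<lambda>i. {t \<in> X1. proj3 i t \<in> xsub \<rho> i}) \<rparr>)"

end

theory Submission
  imports Defs
begin

lemma proj3_add: "proj3 i (a + b) = proj3 i a + proj3 i b"
  by (simp add: proj3_def)

lemma proj3_neg: "proj3 i (- a) = - proj3 i a"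
  by (simp add: proj3_def)

lemma sum3_perm:
  assumes "{i, j, k} = {1::nat, 2, 3}"
  shows "(x1::'a::ab_group_add) + x2 + x3 = 0 \<Longrightarrow>
    (\<lambda>n. if n = 1 then x1 else if n = 2 then x2 else x3) i +
    (\<lambda>n. if n = 1 then x1 else if n = 2 then x2 else x3) j +
    (\<lambda>n. if n = 1 then x1 else if n = 2 then x2 else x3) k = 0"
proof -
  assume h: "x1 + x2 + x3 = 0"
  have "i \<in> {1,2,3}" "j \<in> {1,2,3}" "k \<in> {1,2,3}" using assms by blast+
  moreover have "i \<noteq> j"
  proof
    assume "i = j" then have "(1::nat) \<in> {j,k}" "(2::nat) \<in> {j,k}" "(3::nat) \<in> {j,k}" using assms by auto
    then show False by auto
  qed
  moreover have "i \<noteq> k"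
  proof
    assume "i = k" then have "(1::nat) \<in> {j,k}" "(2::nat) \<in> {j,k}" "(3::nat) \<in> {j,k}" using assms by auto
    then show False by auto
  qed
  moreover have "j \<noteq> k"
  proof
    assume "j = k" then have "(1::nat) \<in> {i,k}" "(2::nat) \<in> {i,k}" "(3::nat) \<in> {i,k}" using assms by auto
    then show False by auto
  qed
  ultimately show ?thesis using h by (auto simp: algebra_simps)
qed

lemma sp_Phi: "v \<in> sp (Phi X) \<longleftrightarrow> (proj3 1 v \<in> ysub X 1 \<and> proj3 2 v \<in> ysub X 2 \<and> proj3 3 v \<in> ysub X 3 \<and>
   proj3 1 v + proj3 2 v + proj3 3 v = 0)"
  by (simp add: Phi_def Let_def)

lemma ysub_Phi: "ysub (Phi X) i = {t \<in> sp (Phi X). proj3 i t \<in> xsub X i}"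
  by (simp add: Phi_def Let_def)

lemma xsub_Phi: "xsub (Phi X) i = {t \<in> sp (Phi X). proj3 i t = 0}"
  by (simp add: Phi_def Let_def)

lemma part1:
  assumes "{i, j, k} = {1::nat, 2, 3}" and v: "v \<in> sp (Phi (Phi (Phi \<rho>)))"
  shows "proj3 i (proj3 j (proj3 i v)) + proj3 i (proj3 k (proj3 i v)) = 0 \<and>
            proj3 i (proj3 i (proj3 i v)) = 0"
proof -
  define w where "w = proj3 i v"
  have i3: "i \<in> {1,2,3}" using assms(1) by blast
  have "w \<in> ysub (Phi (Phi \<rho>)) i" using v i3 unfolding w_def sp_Phi[of v] by auto
  then have w: "w \<in> sp (Phi (Phi \<rho>))" and wi: "proj3 i w \<in> xsub (Phi \<rho>) i"
    by (auto simp: ysub_Phi)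
  from wi have z: "proj3 i (proj3 i w) = 0" by (simp add: xsub_Phi)
  from w have "proj3 1 w + proj3 2 w + proj3 3 w = 0" by (simp add: sp_Phi)
  then have "proj3 i (proj3 1 w + proj3 2 w + proj3 3 w) = 0" by (simp add: proj3_def)
  then have "proj3 i (proj3 1 w) + proj3 i (proj3 2 w) + proj3 i (proj3 3 w) = 0"
    by (simp add: proj3_add)
  from sum3_perm[OF assms(1) this]
  have "proj3 i (proj3 i w) + proj3 i (proj3 j w) + proj3 i (proj3 k w) = 0"
    by (simp add: proj3_def split: if_splits)
  with z show ?thesis unfolding w_def by simp
qed

lemma module_scale3: assumes "module (s::'k::comm_ring_1 \<Rightarrow> 'v::ab_group_add \<Rightarrow> 'v)" shows "module (scale3 s)"
proof -
  have "\<And>a x y. s a (x + y) = s a x + s a y" "\<And>a b x. s (a + b) x = s a x + s b x"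
     "\<And>a b x. s a (s b x) = s (a * b) x" "\<And>x. s 1 x = x"
    using assms unfolding module_def by auto
  then show ?thesis unfolding module_def scale3_def by simp
qed

theorem mainTheorem15:
  fixes s :: "'k::field \<Rightarrow> 'v::ab_group_add \<Rightarrow> 'v"
    and \<rho> :: "'v drep"
    and i j k :: nat
  assumes "vector_space s"
    and "is_rep s \<rho>"
    and "{i, j, k} = {1, 2, 3}"
  shows "(\<forall>v\<in>sp (Phi (Phi (Phi \<rho>))).
            proj3 i (proj3 j (proj3 i v)) + proj3 i (proj3 k (proj3 i v)) = 0 \<and>
            proj3 i (proj3 i (proj3 i v)) = 0) \<and>
         (\<forall>B. module.subspace (scale3 (scale3 (scale3 s))) B \<and> B \<subseteq> sp (Phi (Phi (Phi \<rho>))) \<longrightarrow>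
            (\<lambda>v. proj3 i (proj3 j (proj3 i v))) ` B = (\<lambda>v. proj3 i (proj3 k (proj3 i v))) ` B)"
proof -
  have P1: "\<forall>v\<in>sp (Phi (Phi (Phi \<rho>))).
            proj3 i (proj3 j (proj3 i v)) + proj3 i (proj3 k (proj3 i v)) = 0 \<and>
            proj3 i (proj3 i (proj3 i v)) = 0" using part1[OF assms(3)] by blast
  have md: "module s" using assms(1) unfolding vector_space_def module_def by simp
  have neg: "scale3 (scale3 (scale3 s)) (-1) v = - v" for v
  proof -
    have m: "s (-1) x = - x" for x
    proof -
      have md: "module s" using assms(1) unfolding vector_space_def module_def by simp
      show ?thesis using module.scale_minus_left[OF md, of 1 x] module.scale_one[OF md, of x] by simp
    qed
    show ?thesis by (cases v) (auto simp: scale3_def m)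
  qed
  have "(\<lambda>v. proj3 i (proj3 j (proj3 i v))) ` B = (\<lambda>v. proj3 i (proj3 k (proj3 i v))) ` B"
    if B: "module.subspace (scale3 (scale3 (scale3 s))) B" "B \<subseteq> sp (Phi (Phi (Phi \<rho>)))" for B
  proof -
    have nB: "- v \<in> B" if "v \<in> B" for v
    proof -
      have "scale3 (scale3 (scale3 s)) (-1) v \<in> B" using B(1) that unfolding module.subspace_def[OF module_scale3[OF module_scale3[OF module_scale3[OF md]]]]
        by (elim conjE) (erule allE[of _ "-1"], erule bspec)
      then show ?thesis using neg[of v] by simp
    qed
    have eq: "proj3 i (proj3 k (proj3 i v)) = proj3 i (proj3 j (proj3 i (- v)))" if "v \<in> B" for v
      using P1 B(2) that by (force simp: proj3_neg eq_neg_iff_add_eq_0 add.commute)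
    have eq2: "proj3 i (proj3 j (proj3 i v)) = proj3 i (proj3 k (proj3 i (- v)))" if "v \<in> B" for v
      using P1 B(2) that by (force simp: proj3_neg eq_neg_iff_add_eq_0 add.commute)
    show ?thesis
    proof
      show "(\<lambda>v. proj3 i (proj3 j (proj3 i v))) ` B \<subseteq> (\<lambda>v. proj3 i (proj3 k (proj3 i v))) ` B"
        using eq2 nB by blast
      show "(\<lambda>v. proj3 i (proj3 k (proj3 i v))) ` B \<subseteq> (\<lambda>v. proj3 i (proj3 j (proj3 i v))) ` B"
        using eq nB by blast
    qed
  qed
  with P1 show ?thesis by blast
qed

end
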